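(* For every definable relation $R(\bar x,\bar y)$, with $\bar x$ of length $k$ and $\bar y=(y_1,\dots,y_l)$, there is a natural number $K$ such that for every $\bar a\in\mathcal M^k$ the following are equivalent: (1) $R(\bar a,\bar b)$ holds for some linearly independent tuple $\bar b\in\mathcal M^l$ with $\mathcal V(\bar a)\cap\mathcal V(\bar b)=\{\vec 0\}$; (2) $R(\bar a,\bar b)$ holds for every linearly independent tuple $\bar b\in\mathcal M^l$ with $\mathcal V(\bar a)\cap\mathcal V(\bar b)=\{\vec 0\}$; (3) $(\exists_{>K}\bar y)R(\bar a,\bar y)$.
   Context: $\mathcal M$ denotes the $\mathbb Q$-vector space $\mathbb Q^{<\omega}$ of all sequences of rationals with only finitely many nonzero terms, with zero vector $\vec 0$, regarded as the structure $\langle\mathcal M;+\rangle$. A relation on $\mathcal M$ is definable if it is first-order definable without parameters in $\langle\mathcal M;+\rangle$. $\mathcal V(\bar a)$ denotes the $\mathbb Q$-linear span of the entries of $\bar a$. The quantifier $(\exists_{>K}y)Q(y)$ means "there are at least $K+1$ pairwise distinct $y$ with $Q(y)$"; for tuples, $(\exists_{>K}y_1,\dots,y_l)Q(\bar y):=(\exists_{>K}y_1)(\exists_{>K}y_2,\dots,y_l)Q(\bar y)$. *)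

theory Defs
  imports Complex_Main "HOL-Library.Poly_Mapping"
begin

text \<open>The structure M = Q^{<omega}: finitely supported sequences of rationals.\<close>
type_synonym vec = "nat \<Rightarrow>\<^sub>0 rat"

definition smult :: "rat \<Rightarrow> vec \<Rightarrow> vec" where
  "smult c v = Poly_Mapping.map (\<lambda>x. c * x) v"

definition lincomb :: "(nat \<Rightarrow> rat) \<Rightarrow> vec list \<Rightarrow> vec" where
  "lincomb c vs = (\<Sum>i<length vs. smult (c i) (vs ! i))"

definition vspan :: "vec list \<Rightarrow> vec set" where
  "vspan vs = {lincomb c vs | c. True}"

definition lin_indep :: "vec list \<Rightarrow> bool" where
  "lin_indep vs \<longleftrightarrow> (\<forall>c. lincomb c vs = 0 \<longrightarrow> (\<forall>i<length vs. c i = 0))"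

datatype tm = Var nat | Plus tm tm

datatype fm = Eq tm tm | Neg fm | Conj fm fm | Ex nat fm

fun tval :: "(nat \<Rightarrow> vec) \<Rightarrow> tm \<Rightarrow> vec" where
  "tval e (Var n) = e n"
| "tval e (Plus s t) = tval e s + tval e t"

fun sat :: "(nat \<Rightarrow> vec) \<Rightarrow> fm \<Rightarrow> bool" where
  "sat e (Eq s t) = (tval e s = tval e t)"
| "sat e (Neg f) = (\<not> sat e f)"
| "sat e (Conj f g) = (sat e f \<and> sat e g)"
| "sat e (Ex n f) = (\<exists>v. sat (e(n := v)) f)"

fun tvars :: "tm \<Rightarrow> nat set" where
  "tvars (Var n) = {n}"
| "tvars (Plus s t) = tvars s \<union> tvars t"

fun fv :: "fm \<Rightarrow> nat set" where
  "fv (Eq s t) = tvars s \<union> tvars t"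
| "fv (Neg f) = fv f"
| "fv (Conj f g) = fv f \<union> fv g"
| "fv (Ex n f) = fv f - {n}"

definition env :: "vec list \<Rightarrow> nat \<Rightarrow> vec" where
  "env xs i = (if i < length xs then xs ! i else 0)"

definition definable :: "nat \<Rightarrow> (vec list \<Rightarrow> bool) \<Rightarrow> bool" where
  "definable n P \<longleftrightarrow> (\<exists>\<phi>. fv \<phi> \<subseteq> {..<n} \<and>
      (\<forall>xs. length xs = n \<longrightarrow> (P xs \<longleftrightarrow> sat (env xs) \<phi>)))"

text \<open>Counting quantifier (exists_{>K} y_1,...,y_l) Q(y): iterated, as in the paper.\<close>
fun exists_gt :: "nat \<Rightarrow> nat \<Rightarrow> (vec list \<Rightarrow> bool) \<Rightarrow> bool" where
  "exists_gt K 0 Q = Q []"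
| "exists_gt K (Suc n) Q =
     (\<exists>S. finite S \<and> K < card S \<and> (\<forall>y\<in>S. exists_gt K n (\<lambda>ys. Q (y # ys))))"

end

theory Submission
  imports Defs "HOL-Library.Infinite_Set"
begin


lemma lookup_smult[simp]: "Poly_Mapping.lookup (smult c v) i = c * Poly_Mapping.lookup v i"
  by (simp add: smult_def map.rep_eq when_def)

lemma smult_add_left: "smult (a+b) v = smult a v + smult b v"
  by (rule poly_mapping_eqI) (simp add: lookup_add algebra_simps)
lemma smult_add_right: "smult a (u+v) = smult a u + smult a v"
  by (rule poly_mapping_eqI) (simp add: lookup_add algebra_simps)
lemma smult_0_left[simp]: "smult 0 v = 0"
  by (rule poly_mapping_eqI) simp
lemma smult_0_right[simp]: "smult c 0 = 0"
  by (rule poly_mapping_eqI) simp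
lemma smult_1[simp]: "smult 1 v = v"
  by (rule poly_mapping_eqI) simp
lemma smult_smult[simp]: "smult a (smult b v) = smult (a*b) v"
  by (rule poly_mapping_eqI) simp
lemma smult_eq_0_iff[simp]: "smult c v = 0 \<longleftrightarrow> c = 0 \<or> v = 0"
  by (auto simp: poly_mapping_eq_iff fun_eq_iff)

lemma solve_lin: "c \<noteq> 0 \<Longrightarrow> (\<alpha> + smult c y = 0) \<longleftrightarrow> y = smult (-1/c) \<alpha>"
proof -
  assume c: "c \<noteq> 0"
  have "(\<alpha> + smult c y = 0) \<longleftrightarrow> (\<forall>x. Poly_Mapping.lookup \<alpha> x + c * Poly_Mapping.lookup y x = 0)"
    by (simp add: poly_mapping_eq_iff fun_eq_iff lookup_add)
  also have "\<dots> \<longleftrightarrow> (\<forall>x. Poly_Mapping.lookup y x = -1/c * Poly_Mapping.lookup \<alpha> x)"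
  proof (intro iff_allI)
    fix x show "(Poly_Mapping.lookup \<alpha> x + c * Poly_Mapping.lookup y x = 0) = (Poly_Mapping.lookup y x = -1/c * Poly_Mapping.lookup \<alpha> x)"
      using c by (auto simp: field_simps)
  qed
  also have "\<dots> \<longleftrightarrow> y = smult (-1/c) \<alpha>"
    by (simp add: poly_mapping_eq_iff fun_eq_iff)
  finally show ?thesis .
qed

lemma lookup_lincomb: "Poly_Mapping.lookup (lincomb c vs) i = (\<Sum>j<length vs. c j * Poly_Mapping.lookup (vs!j) i)"
  by (simp add: lincomb_def lookup_sum)

lemma lincomb_Nil[simp]: "lincomb c [] = 0"
  by (simp add: lincomb_def)

lemma lincomb_Cons: "lincomb c (x#xs) = smult (c 0) x + lincomb (\<lambda>i. c (Suc i)) xs"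
  by (simp add: lincomb_def sum.lessThan_Suc_shift del: sum.lessThan_Suc)

lemma lincomb_cong: "(\<And>i. i < length xs \<Longrightarrow> c i = d i) \<Longrightarrow> lincomb c xs = lincomb d xs"
  by (simp add: lincomb_def)

lemma lincomb_snoc: "lincomb c (xs@[y]) = lincomb c xs + smult (c (length xs)) y"
  by (simp add: lincomb_def nth_append)

lemma lincomb_zero: "(\<And>i. i < length xs \<Longrightarrow> c i = 0) \<Longrightarrow> lincomb c xs = 0"
  by (simp add: lincomb_def)

lemma lincomb_lin: "lincomb (\<lambda>i. a * c i + b * d i) xs = smult a (lincomb c xs) + smult b (lincomb d xs)"
  by (rule poly_mapping_eqI) (simp add: lookup_lincomb lookup_add sum_distrib_left sum.distrib algebra_simps)

lemma vspan_iff: "x \<in> vspan xs \<longleftrightarrow> (\<exists>c. x = lincomb c xs)"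
  by (auto simp: vspan_def)

lemma zero_vspan[simp]: "0 \<in> vspan xs"
  unfolding vspan_iff by (rule exI[of _ "\<lambda>_. 0"]) (simp add: lincomb_zero)

lemma vspan_lin: "u \<in> vspan xs \<Longrightarrow> v \<in> vspan xs \<Longrightarrow> smult a u + smult b v \<in> vspan xs"
  unfolding vspan_iff using lincomb_lin by metis

lemma vspan_add: "u \<in> vspan xs \<Longrightarrow> v \<in> vspan xs \<Longrightarrow> u + v \<in> vspan xs"
  using vspan_lin[of u xs v 1 1] by simp

lemma vspan_smult: "u \<in> vspan xs \<Longrightarrow> smult a u \<in> vspan xs"
  using vspan_lin[of u xs 0 a 0] by simp

lemma smult_neg1: "smult (-1) u = - u"
  by (rule poly_mapping_eqI) simp

lemma vspan_uminus: "u \<in> vspan xs \<Longrightarrow> - u \<in> vspan xs"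
  using vspan_smult[of u xs "-1"] by (simp add: smult_neg1)

lemma vspan_diff: "u \<in> vspan xs \<Longrightarrow> v \<in> vspan xs \<Longrightarrow> u - v \<in> vspan xs"
  using vspan_add[OF _ vspan_uminus, of u xs v] by simp

lemma vspan_Cons: "x \<in> vspan (y#xs) \<longleftrightarrow> (\<exists>t u. u \<in> vspan xs \<and> x = smult t y + u)"
proof
  assume "x \<in> vspan (y#xs)" then show "\<exists>t u. u \<in> vspan xs \<and> x = smult t y + u"
    by (auto simp: vspan_iff lincomb_Cons)
next
  assume "\<exists>t u. u \<in> vspan xs \<and> x = smult t y + u"
  then obtain t c where "x = smult t y + lincomb c xs" by (auto simp: vspan_iff)
  then have "x = lincomb (case_nat t c) (y#xs)" by (simp add: lincomb_Cons)
  then show "x \<in> vspan (y#xs)" by (auto simp: vspan_iff)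
qed

lemma vspan_snoc: "x \<in> vspan (xs@[y]) \<longleftrightarrow> (\<exists>t u. u \<in> vspan xs \<and> x = u + smult t y)"
proof
  assume "x \<in> vspan (xs@[y])" then show "\<exists>t u. u \<in> vspan xs \<and> x = u + smult t y"
    by (auto simp: vspan_iff lincomb_snoc)
next
  assume "\<exists>t u. u \<in> vspan xs \<and> x = u + smult t y"
  then obtain t c where x: "x = lincomb c xs + smult t y" by (auto simp: vspan_iff)
  have "lincomb (c(length xs := t)) xs = lincomb c xs" by (rule lincomb_cong) simp
  then have "x = lincomb (c(length xs := t)) (xs@[y])" by (simp add: lincomb_snoc x)
  then show "x \<in> vspan (xs@[y])" by (auto simp: vspan_iff)
qed

lemma vspan_mono_snoc: "x \<in> vspan xs \<Longrightarrow> x \<in> vspan (xs@[y])"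
  unfolding vspan_snoc[of x xs y] by (rule exI[of _ 0]) auto

lemma vspan_last: "y \<in> vspan (xs@[y])"
  unfolding vspan_snoc[of y xs y] by (rule exI[of _ 1]) auto

lemma vspan_elem: "i < length xs \<Longrightarrow> xs ! i \<in> vspan xs"
proof -
  assume i: "i < length xs"
  have "lincomb (\<lambda>j. if j = i then 1 else 0) xs = (\<Sum>j<length xs. if j = i then xs ! j else 0)"
    unfolding lincomb_def by (rule sum.cong) auto
  also have "\<dots> = xs ! i" using i by simp
  finally have "lincomb (\<lambda>j. if j = i then 1 else 0) xs = xs ! i" .
  then show ?thesis by (metis vspan_iff)
qed




definition lev :: "nat \<Rightarrow> (nat \<Rightarrow> rat) \<Rightarrow> (nat \<Rightarrow> vec) \<Rightarrow> vec" where
  "lev M L e = (\<Sum>i<M. smult (L i) (e i))"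

fun allv :: "fm \<Rightarrow> nat set" where
  "allv (Eq s t) = tvars s \<union> tvars t"
| "allv (Neg f) = allv f"
| "allv (Conj f g) = allv f \<union> allv g"
| "allv (Ex n f) = insert n (allv f)"

fun cnt :: "tm \<Rightarrow> nat \<Rightarrow> rat" where
  "cnt (Var m) i = (if i = m then 1 else 0)"
| "cnt (Plus s t) i = cnt s i + cnt t i"

lemma lookup_lev: "Poly_Mapping.lookup (lev M L e) x = (\<Sum>i<M. L i * Poly_Mapping.lookup (e i) x)"
  by (simp add: lev_def lookup_sum)

lemma lev_lin: "lev M (\<lambda>i. a * f i + b * g i) e = smult a (lev M f e) + smult b (lev M g e)"
  by (rule poly_mapping_eqI) (simp add: lookup_lev lookup_add sum_distrib_left sum.distrib algebra_simps)

lemma lev_upd: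
  assumes "n < M"
  shows "lev M L (e(n:=v)) = lev M (L(n:=0)) e + smult (L n) v"
proof (rule poly_mapping_eqI)
  fix x
  have "(\<Sum>i<M. L i * Poly_Mapping.lookup ((e(n:=v)) i) x)
      = (\<Sum>i<M. (L(n:=0)) i * Poly_Mapping.lookup (e i) x + (if i = n then L n * Poly_Mapping.lookup v x else 0))"
    by (rule sum.cong) auto
  also have "\<dots> = (\<Sum>i<M. (L(n:=0)) i * Poly_Mapping.lookup (e i) x) + L n * Poly_Mapping.lookup v x"
    using assms by (simp add: sum.distrib)
  finally show "Poly_Mapping.lookup (lev M L (e(n:=v))) x = Poly_Mapping.lookup (lev M (L(n:=0)) e + smult (L n) v) x"
    by (simp add: lookup_lev lookup_add)
qed

lemma tval_lev: "tvars s \<subseteq> {..<M} \<Longrightarrow> tval e s = lev M (cnt s) e"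
proof (induction s)
  case (Var m)
  show ?case
  proof (rule poly_mapping_eqI)
    fix x
    have "(\<Sum>i<M. cnt (Var m) i * Poly_Mapping.lookup (e i) x) = (\<Sum>i<M. if i = m then Poly_Mapping.lookup (e i) x else 0)"
      by (rule sum.cong) auto
    also have "\<dots> = Poly_Mapping.lookup (e m) x" using Var by simp
    finally show "Poly_Mapping.lookup (tval e (Var m)) x = Poly_Mapping.lookup (lev M (cnt (Var m)) e) x"
      by (simp add: lookup_lev)
  qed
next
  case (Plus s t)
  have "cnt (Plus s t) = (\<lambda>i. 1 * cnt s i + 1 * cnt t i)" by (rule ext) simp
  then have "lev M (cnt (Plus s t)) e = lev M (\<lambda>i. 1 * cnt s i + 1 * cnt t i) e" by simp
  also have "\<dots> = lev M (cnt s) e + lev M (cnt t) e" by (simp only: lev_lin smult_1)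
  finally show ?case using Plus by (simp del: cnt.simps)
qed

lemma infinite_vec: "infinite (UNIV :: vec set)"
proof -
  have "inj (\<lambda>q::rat. Poly_Mapping.single (0::nat) q)"
  proof (rule injI)
    fix a b :: rat assume "Poly_Mapping.single (0::nat) a = Poly_Mapping.single 0 b"
    then have "Poly_Mapping.lookup (Poly_Mapping.single (0::nat) a) 0 = Poly_Mapping.lookup (Poly_Mapping.single 0 b) 0" by simp
    then show "a = b" by simp
  qed
  then have "infinite (range (\<lambda>q::rat. Poly_Mapping.single (0::nat) q))"
  proof -
    have "infinite (UNIV::rat set)" by (rule infinite_UNIV_char_0)
    then show ?thesis using \<open>inj (\<lambda>q::rat. Poly_Mapping.single (0::nat) q)\<close> by (simp add: finite_image_iff)
  qed
  then show ?thesis by (rule infinite_super[rotated]) simp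
qed

lemma elim_lemma:
  fixes X1 X2 w :: vec
  assumes c1: "c1 \<noteq> 0" and h: "X1 + smult c1 w = 0"
  shows "(X2 + smult c2 w = 0) \<longleftrightarrow> (smult c1 X2 + smult (-c2) X1 = 0)"
proof -
  have h': "\<And>x. Poly_Mapping.lookup X1 x + c1 * Poly_Mapping.lookup w x = 0"
    using h by (metis lookup_add lookup_smult lookup_zero)
  have "(X2 + smult c2 w = 0) \<longleftrightarrow> (\<forall>x. Poly_Mapping.lookup X2 x + c2 * Poly_Mapping.lookup w x = 0)"
    by (simp add: poly_mapping_eq_iff fun_eq_iff lookup_add)
  also have "\<dots> \<longleftrightarrow> (\<forall>x. c1 * Poly_Mapping.lookup X2 x + (-c2) * Poly_Mapping.lookup X1 x = 0)"
  proof (intro iff_allI)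
    fix x
    have "c1 * Poly_Mapping.lookup X2 x + (-c2) * Poly_Mapping.lookup X1 x
        = c1 * (Poly_Mapping.lookup X2 x + c2 * Poly_Mapping.lookup w x) - c2 * (Poly_Mapping.lookup X1 x + c1 * Poly_Mapping.lookup w x)"
      by (simp add: algebra_simps)
    also have "\<dots> = c1 * (Poly_Mapping.lookup X2 x + c2 * Poly_Mapping.lookup w x)" using h'[of x] by simp
    finally show "(Poly_Mapping.lookup X2 x + c2 * Poly_Mapping.lookup w x = 0) = (c1 * Poly_Mapping.lookup X2 x + (-c2) * Poly_Mapping.lookup X1 x = 0)"
      using c1 by simp
  qed
  also have "\<dots> \<longleftrightarrow> (smult c1 X2 + smult (-c2) X1 = 0)"
    by (simp add: poly_mapping_eq_iff fun_eq_iff lookup_add)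
  finally show ?thesis .
qed

definition agree :: "nat \<Rightarrow> (nat \<Rightarrow> rat) set \<Rightarrow> (nat \<Rightarrow> vec) \<Rightarrow> (nat \<Rightarrow> vec) \<Rightarrow> bool" where
  "agree M E e e' \<longleftrightarrow> (\<forall>L\<in>E. (lev M L e = 0) = (lev M L e' = 0))"

lemma agree_sym: "agree M E e e' \<Longrightarrow> agree M E e' e"
  by (auto simp: agree_def)

lemma qe: "allv \<phi> \<subseteq> {..<M} \<Longrightarrow> \<exists>E. finite E \<and> (\<forall>e e'. agree M E e e' \<longrightarrow> (sat e \<phi> = sat e' \<phi>))"
proof (induction \<phi>)
  case (Eq s t)
  define L where "L = (\<lambda>i. 1 * cnt s i + (-1) * cnt t i)"
  have lv: "lev M L e = tval e s - tval e t" for e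
    using Eq tval_lev[of s M e] tval_lev[of t M e] unfolding L_def by (simp only: lev_lin smult_1 smult_neg1) simp
  have "sat e (Eq s t) = (lev M L e = 0)" for e by (simp add: lv)
  then show ?case
    by (intro exI[of _ "{L}"]) (auto simp: agree_def)
next
  case (Neg f)
  then show ?case by auto
next
  case (Conj f g)
  then obtain E1 E2 where h: "finite E1" "\<forall>e e'. agree M E1 e e' \<longrightarrow> (sat e f = sat e' f)"
    "finite E2" "\<forall>e e'. agree M E2 e e' \<longrightarrow> (sat e g = sat e' g)" by auto
  have a: "agree M E1 e e' \<and> agree M E2 e e'" if "agree M (E1 \<union> E2) e e'" for e e'
    using that by (auto simp: agree_def)
  have "\<forall>e e'. agree M (E1 \<union> E2) e e' \<longrightarrow> (sat e (Conj f g) = sat e' (Conj f g))"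
  proof (intro allI impI)
    fix e e' assume ag: "agree M (E1 \<union> E2) e e'"
    from a[OF ag] h(2) h(4) have "sat e f = sat e' f" "sat e g = sat e' g" by blast+
    then show "sat e (Conj f g) = sat e' (Conj f g)" by simp
  qed
  then show ?case using h by blast
next
  case (Ex n f)
  then have nM: "n < M" and "allv f \<subseteq> {..<M}" by auto
  then obtain E where finE: "finite E" and E: "\<And>e e'. agree M E e e' \<Longrightarrow> (sat e f = sat e' f)"
    using Ex by auto
  define X where "X L e = lev M (L(n:=0)) e" for L e
  define comb where "comb L1 L2 = (\<lambda>i. L1 n * (L2(n:=0)) i + (- L2 n) * (L1(n:=0)) i)" for L1 L2 :: "nat \<Rightarrow> rat"
  define E' where "E' = (\<lambda>L. L(n:=0)) ` E \<union> (\<lambda>(L1,L2). comb L1 L2) ` (E \<times> E)"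
  have finE': "finite E'" using finE by (simp add: E'_def)
  have levc: "lev M (comb L1 L2) e = smult (L1 n) (X L2 e) + smult (- L2 n) (X L1 e)" for L1 L2 e
    unfolding comb_def X_def by (rule lev_lin)
  have upd: "lev M L (e(n:=v)) = X L e + smult (L n) v" for L e v
    unfolding X_def using nM by (rule lev_upd)
  have dir: "sat e' (Ex n f)" if ag: "agree M E' e e'" and s: "sat e (Ex n f)" for e e'
  proof -
    from s obtain v where sv: "sat (e(n:=v)) f" by auto
    have agX: "(X L e = 0) = (X L e' = 0)" if "L \<in> E" for L
      using ag that unfolding agree_def E'_def X_def by auto
    have agC: "(lev M (comb L1 L2) e = 0) = (lev M (comb L1 L2) e' = 0)" if "L1 \<in> E" "L2 \<in> E" for L1 L2
      using ag that unfolding agree_def E'_def by auto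
    show ?thesis
    proof (cases "\<exists>L1\<in>E. L1 n \<noteq> 0 \<and> X L1 e + smult (L1 n) v = 0")
      case True
      then obtain L1 where L1: "L1 \<in> E" "L1 n \<noteq> 0" "X L1 e + smult (L1 n) v = 0" by auto
      define v' where "v' = smult (-1 / L1 n) (X L1 e')"
      have h': "X L1 e' + smult (L1 n) v' = 0" unfolding solve_lin[OF L1(2)] v'_def by (rule refl)
      have "agree M E (e(n:=v)) (e'(n:=v'))"
        unfolding agree_def
      proof
        fix L2 assume L2: "L2 \<in> E"
        have "(lev M L2 (e(n:=v)) = 0) = (lev M (comb L1 L2) e = 0)"
          unfolding upd levc using elim_lemma[OF L1(2) L1(3)] .
        also have "\<dots> = (lev M (comb L1 L2) e' = 0)" using agC L1(1) L2 by blast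
        also have "\<dots> = (lev M L2 (e'(n:=v')) = 0)"
          unfolding upd levc using elim_lemma[OF L1(2) h'] by simp
        finally show "(lev M L2 (e(n:=v)) = 0) = (lev M L2 (e'(n:=v')) = 0)" .
      qed
      then have "sat (e'(n:=v')) f" using E sv by blast
      then show ?thesis by auto
    next
      case False
      let ?Fb = "(\<lambda>L. smult (-1 / L n) (X L e')) ` E"
      obtain v' where v': "v' \<notin> ?Fb" using ex_new_if_finite[OF infinite_vec] finE by blast
      have "agree M E (e(n:=v)) (e'(n:=v'))"
        unfolding agree_def
      proof
        fix L assume L: "L \<in> E"
        show "(lev M L (e(n:=v)) = 0) = (lev M L (e'(n:=v')) = 0)"
        proof (cases "L n = 0")
          case True
          then show ?thesis unfolding upd using agX[OF L] by simp
        next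
          case nz: False
          have "lev M L (e(n:=v)) \<noteq> 0" unfolding upd using False L nz by blast
          moreover have "lev M L (e'(n:=v')) \<noteq> 0"
            unfolding upd solve_lin[OF nz] using v' L by blast
          ultimately show ?thesis by simp
        qed
      qed
      then have "sat (e'(n:=v')) f" using E sv by blast
      then show ?thesis by auto
    qed
  qed
  show ?case
  proof (rule exI[of _ E'], intro conjI finE' allI impI)
    fix e e' assume ag: "agree M E' e e'"
    show "sat e (Ex n f) = sat e' (Ex n f)"
      using dir[OF ag] dir[OF agree_sym[OF ag]] by blast
  qed
qed




lemma smult_minus_left: "smult (-c) y = - smult c y"
  by (rule poly_mapping_eqI) simp

lemma fresh_bound: "\<exists>m. \<forall>x\<in>vspan a. \<forall>i\<ge>m. Poly_Mapping.lookup x i = 0"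
proof -
  have "finite (\<Union>v\<in>set a. Poly_Mapping.keys v)" by (simp add: finite_keys)
  then obtain m where m: "(\<Union>v\<in>set a. Poly_Mapping.keys v) \<subseteq> {..<m}" using finite_nat_iff_bounded by blast
  have z: "Poly_Mapping.lookup v i = 0" if "v \<in> set a" "i \<ge> m" for v i
    using m that by (metis UN_I in_keys_iff lessThan_iff not_le subsetD)
  have "Poly_Mapping.lookup x i = 0" if "x \<in> vspan a" "i \<ge> m" for x i
  proof -
    from that obtain c where "x = lincomb c a" by (auto simp: vspan_iff)
    then show ?thesis using z that(2) by (simp add: lookup_lincomb)
  qed
  then show ?thesis by blast
qed

lemma infinite_compl: "infinite (- vspan a)"
proof -
  obtain m where m: "\<forall>x\<in>vspan a. \<forall>i\<ge>m. Poly_Mapping.lookup x i = 0" using fresh_bound by blast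
  let ?f = "\<lambda>i. Poly_Mapping.single (m+i) (1::rat)"
  have inj: "inj ?f"
  proof (rule injI)
    fix i j assume "?f i = ?f j"
    then have "Poly_Mapping.lookup (?f i) (m+i) = Poly_Mapping.lookup (?f j) (m+i)" by simp
    then show "i = j" by (cases "i = j") (auto simp: lookup_single_not_eq)
  qed
  have sub: "range ?f \<subseteq> - vspan a"
  proof
    fix x assume "x \<in> range ?f"
    then obtain i where x: "x = ?f i" by auto
    have "Poly_Mapping.lookup x (m+i) = 1" using x by simp
    then show "x \<in> - vspan a" using m by fastforce
  qed
  have "infinite (range ?f)" using inj by (simp add: finite_image_iff)
  then show ?thesis using sub infinite_super by blast
qed

lemma LA:
  assumes y: "y \<notin> vspan a" and li: "lin_indep b" and g: "vspan (a@[y]) \<inter> vspan b = {0}"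
  shows "lin_indep (y#b) \<and> vspan a \<inter> vspan (y#b) = {0}"
proof
  have y0: "y \<noteq> 0" using y by auto
  have inb: "w \<in> vspan b \<Longrightarrow> w \<in> vspan (a@[y]) \<Longrightarrow> w = 0" for w using g by blast
  show "lin_indep (y#b)"
    unfolding lin_indep_def
  proof (rule allI, rule impI)
    fix c assume lc: "lincomb c (y#b) = 0"
    define d where "d = (\<lambda>i. c (Suc i))"
    have "smult (c 0) y + lincomb d b = 0" using lc by (simp add: lincomb_Cons d_def)
    then have e: "lincomb d b = smult (- c 0) y"
      by (simp add: smult_minus_left eq_neg_iff_add_eq_0 add.commute)
    have "lincomb d b = 0"
    proof (rule inb)
      show "lincomb d b \<in> vspan b" by (auto simp: vspan_iff)
      show "lincomb d b \<in> vspan (a@[y])" unfolding e by (intro vspan_smult vspan_last)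
    qed
    then have d0: "\<forall>i<length b. d i = 0" using li by (simp add: lin_indep_def)
    have "smult (- c 0) y = 0" using e \<open>lincomb d b = 0\<close> by simp
    then have c0: "c 0 = 0" using y0 by simp
    show "\<forall>i<length (y#b). c i = 0"
    proof (intro allI impI)
      fix i assume "i < length (y#b)"
      then show "c i = 0" using c0 d0 by (cases i) (auto simp: d_def)
    qed
  qed
  show "vspan a \<inter> vspan (y#b) = {0}"
  proof
    show "{0} \<subseteq> vspan a \<inter> vspan (y#b)" by simp
    show "vspan a \<inter> vspan (y#b) \<subseteq> {0}"
    proof
      fix x assume x: "x \<in> vspan a \<inter> vspan (y#b)"
      then obtain t u where u: "u \<in> vspan b" and xe: "x = smult t y + u"
        by (auto simp: vspan_Cons)
      have "u = x - smult t y" using xe by simp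
      also have "\<dots> \<in> vspan (a@[y])"
        using x vspan_diff[OF vspan_mono_snoc vspan_smult[OF vspan_last]] by blast
      finally have "u \<in> vspan (a@[y])" .
      then have "u = 0" using inb u by blast
      then have xt: "x = smult t y" using xe by simp
      have "t = 0"
      proof (rule ccontr)
        assume "t \<noteq> 0"
        then have "y = smult (1/t) x" using xt by simp
        then have "y \<in> vspan a" using x vspan_smult by auto
        then show False using y by simp
      qed
      then show "x \<in> {0}" using xt by simp
    qed
  qed
qed

lemma vspan_Nil: "vspan [] = {0}"
  by (auto simp: vspan_iff)

lemma generic_Nil: "lin_indep [] \<and> vspan a \<inter> vspan [] = {0}"
  by (auto simp: lin_indep_def vspan_Nil)

lemma exists_generic: "\<exists>g. length g = n \<and> lin_indep g \<and> vspan a \<inter> vspan g = {0}"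
proof (induction n arbitrary: a)
  case 0
  then show ?case using generic_Nil by auto
next
  case (Suc n)
  have "- vspan a \<noteq> {}" using infinite_compl[of a] by (metis finite.emptyI)
  then obtain y where y: "y \<notin> vspan a" by blast
  obtain g where g: "length g = n" "lin_indep g" "vspan (a@[y]) \<inter> vspan g = {0}" using Suc by blast
  show ?case using LA[OF y g(2,3)] g(1) by (intro exI[of _ "y#g"]) auto
qed

lemma exists_gt_mono:
  "(\<And>ys. length ys = n \<Longrightarrow> Q ys \<Longrightarrow> Q' ys) \<Longrightarrow> exists_gt K n Q \<Longrightarrow> exists_gt K n Q'"
proof (induction n arbitrary: Q Q')
  case 0
  then show ?case by simp
next
  case (Suc n)
  from Suc.prems(2) obtain S where S: "finite S" "K < card S" "\<forall>y\<in>S. exists_gt K n (\<lambda>ys. Q (y # ys))" by auto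
  have "\<forall>y\<in>S. exists_gt K n (\<lambda>ys. Q' (y # ys))"
  proof
    fix y assume "y \<in> S"
    then have "exists_gt K n (\<lambda>ys. Q (y # ys))" using S by blast
    then show "exists_gt K n (\<lambda>ys. Q' (y # ys))"
      by (rule Suc.IH[rotated]) (simp add: Suc.prems(1))
  qed
  then show ?case using S by auto
qed

lemma lemG: "(\<forall>b. length b = n \<and> lin_indep b \<and> vspan a \<inter> vspan b = {0} \<longrightarrow> Q b) \<Longrightarrow> exists_gt K n Q"
proof (induction n arbitrary: a Q)
  case 0
  then show ?case using generic_Nil by auto
next
  case (Suc n)
  obtain S where S: "S \<subseteq> - vspan a" "finite S" "card S = Suc K"
    using infinite_arbitrarily_large[OF infinite_compl[of a]] by blast
  have "exists_gt K n (\<lambda>ys. Q (y # ys))" if yS: "y \<in> S" for y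
  proof (rule Suc.IH[of "a@[y]"], intro allI impI)
    fix b assume b: "length b = n \<and> lin_indep b \<and> vspan (a@[y]) \<inter> vspan b = {0}"
    have y: "y \<notin> vspan a" using S yS by auto
    show "Q (y # b)" using LA[OF y] b Suc.prems by auto
  qed
  then show ?case using S by auto
qed

lemma lemH:
  "finite F \<Longrightarrow> card F \<le> K \<Longrightarrow> (\<forall>p\<in>F. \<exists>j<n. snd p j \<noteq> 0) \<Longrightarrow>
   \<not> exists_gt K n (\<lambda>ys. \<exists>p\<in>F. fst p + lincomb (snd p) ys = 0)"
proof (induction n arbitrary: F)
  case 0
  then show ?case by auto
next
  case (Suc n)
  show ?case
  proof
    assume "exists_gt K (Suc n) (\<lambda>ys. \<exists>p\<in>F. fst p + lincomb (snd p) ys = 0)"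
    then obtain S where S: "finite S" "K < card S"
      "\<forall>y\<in>S. exists_gt K n (\<lambda>ys. \<exists>p\<in>F. fst p + lincomb (snd p) (y#ys) = 0)" by auto
    define Sp where "Sp = (\<lambda>p. smult (-1 / snd p 0) (fst p)) ` {p\<in>F. \<forall>j<n. snd p (Suc j) = 0}"
    have "card Sp \<le> card {p\<in>F. \<forall>j<n. snd p (Suc j) = 0}" unfolding Sp_def by (rule card_image_le) (use Suc.prems in auto)
    also have "\<dots> \<le> card F" by (rule card_mono) (use Suc.prems in auto)
    finally have cSp: "card Sp \<le> K" using Suc.prems by simp
    have "\<not> S \<subseteq> Sp"
    proof
      assume "S \<subseteq> Sp"
      then have "card S \<le> card Sp" by (rule card_mono[rotated]) (use Suc.prems in \<open>simp add: Sp_def\<close>)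
      then show False using cSp S by simp
    qed
    then obtain y where yS: "y \<in> S" and ySp: "y \<notin> Sp" by blast
    define F' where "F' = (\<lambda>p. (fst p + smult (snd p 0) y, \<lambda>j. snd p (Suc j))) ` {p\<in>F. \<exists>j<n. snd p (Suc j) \<noteq> 0}"
    have finF': "finite F'" using Suc.prems by (simp add: F'_def)
    have "card F' \<le> card {p\<in>F. \<exists>j<n. snd p (Suc j) \<noteq> 0}" unfolding F'_def by (rule card_image_le) (use Suc.prems in auto)
    also have "\<dots> \<le> card F" by (rule card_mono) (use Suc.prems in auto)
    finally have cF': "card F' \<le> K" using Suc.prems by simp
    have ndF': "\<forall>p\<in>F'. \<exists>j<n. snd p j \<noteq> 0" by (auto simp: F'_def)
    have "exists_gt K n (\<lambda>ys. \<exists>p\<in>F'. fst p + lincomb (snd p) ys = 0)"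
    proof (rule exists_gt_mono[OF _ S(3)[rule_format, OF yS]])
      fix ys assume len: "length ys = n" and "\<exists>p\<in>F. fst p + lincomb (snd p) (y#ys) = 0"
      then obtain p where pF: "p \<in> F" and pe: "fst p + (smult (snd p 0) y + lincomb (\<lambda>i. snd p (Suc i)) ys) = 0"
        by (auto simp: lincomb_Cons)
      show "\<exists>p\<in>F'. fst p + lincomb (snd p) ys = 0"
      proof (cases "\<exists>j<n. snd p (Suc j) \<noteq> 0")
        case True
        then have "(fst p + smult (snd p 0) y, \<lambda>j. snd p (Suc j)) \<in> F'" using pF by (auto simp: F'_def)
        then show ?thesis using pe by (intro bexI) (auto simp: add.assoc)
      next
        case False
        then have "lincomb (\<lambda>i. snd p (Suc i)) ys = 0" using len by (intro lincomb_zero) auto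
        then have pe2: "fst p + smult (snd p 0) y = 0" using pe by simp
        have nz: "snd p 0 \<noteq> 0"
        proof -
          obtain j where j: "j < Suc n" "snd p j \<noteq> 0" using Suc.prems(3) pF by blast
          then show ?thesis using False by (cases j) auto
        qed
        have "y = smult (-1 / snd p 0) (fst p)" using pe2 solve_lin[OF nz] by simp
        then have "y \<in> Sp" using pF False unfolding Sp_def by blast
        then show ?thesis using ySp by simp
      qed
    qed
    then show False using Suc.IH[OF finF' cF' ndF'] by simp
  qed
qed




lemma finite_tvars: "finite (tvars s)"
  by (induction s) auto

lemma finite_allv: "finite (allv \<phi>)"
  by (induction \<phi>) (auto simp: finite_tvars)

lemma sum_split_add: "(\<Sum>i<k+(l::nat). (f::nat\<Rightarrow>rat) i) = (\<Sum>i<k. f i) + (\<Sum>i<l. f (k+i))"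
  by (induction l arbitrary: f) (auto simp: add.assoc)

lemma lev_env:
  assumes la: "length a = k" and lb: "length b = l" and M: "k + l \<le> M"
  shows "lev M L (env (a@b)) = lincomb L a + lincomb (\<lambda>j. L (k+j)) b"
proof (rule poly_mapping_eqI)
  fix x
  let ?f = "\<lambda>i. L i * Poly_Mapping.lookup (env (a@b) i) x"
  have "(\<Sum>i<M. ?f i) = (\<Sum>i<k+l. ?f i)"
    by (rule sum.mono_neutral_right) (use M la lb in \<open>auto simp: env_def\<close>)
  also have "\<dots> = (\<Sum>i<k. ?f i) + (\<Sum>i<l. ?f (k+i))" by (rule sum_split_add)
  also have "(\<Sum>i<k. ?f i) = (\<Sum>i<k. L i * Poly_Mapping.lookup (a!i) x)"
    by (rule sum.cong) (use la lb in \<open>auto simp: env_def nth_append\<close>)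
  also have "(\<Sum>i<l. ?f (k+i)) = (\<Sum>i<l. L (k+i) * Poly_Mapping.lookup (b!i) x)"
    by (rule sum.cong) (use la lb in \<open>auto simp: env_def nth_append\<close>)
  finally show "Poly_Mapping.lookup (lev M L (env (a@b))) x = Poly_Mapping.lookup (lincomb L a + lincomb (\<lambda>j. L (k+j)) b) x"
    using la lb by (simp add: lookup_lev lookup_add lookup_lincomb)
qed

theorem mainTheorem2:
  fixes R :: "vec list \<Rightarrow> vec list \<Rightarrow> bool" and k l :: nat
  assumes "definable (k + l) (\<lambda>zs. R (take k zs) (drop k zs))"
  shows "\<exists>K::nat. \<forall>a. length a = k \<longrightarrow>
    (((\<exists>b. length b = l \<and> lin_indep b \<and> vspan a \<inter> vspan b = {0} \<and> R a b) \<longleftrightarrow>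
      (\<forall>b. length b = l \<and> lin_indep b \<and> vspan a \<inter> vspan b = {0} \<longrightarrow> R a b)) \<and>
     ((\<forall>b. length b = l \<and> lin_indep b \<and> vspan a \<inter> vspan b = {0} \<longrightarrow> R a b) \<longleftrightarrow>
      exists_gt K l (R a)))"
proof -
  from assms obtain \<phi> where R\<phi>: "\<And>zs. length zs = k + l \<Longrightarrow> R (take k zs) (drop k zs) = sat (env zs) \<phi>"
    unfolding definable_def by blast
  obtain M0 where M0: "allv \<phi> \<subseteq> {..<M0}" using finite_allv[of \<phi>] finite_nat_iff_bounded by blast
  define M where "M = M0 + (k + l)"
  have AM: "allv \<phi> \<subseteq> {..<M}" using M0 by (auto simp: M_def)
  have klM: "k + l \<le> M" by (simp add: M_def)
  obtain E where finE: "finite E" and E: "\<And>e e'. agree M E e e' \<Longrightarrow> sat e \<phi> = sat e' \<phi>"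
    using qe[OF AM] by blast
  show ?thesis
  proof (rule exI[of _ "card E"], intro allI impI)
    fix a :: "vec list" assume la: "length a = k"
    define G where "G b \<longleftrightarrow> length b = l \<and> lin_indep b \<and> vspan a \<inter> vspan b = {0}" for b
    obtain g where gG: "G g" using exists_generic[of l a] by (auto simp: G_def)
    have Riff: "R a b = sat (env (a@b)) \<phi>" if "length b = l" for b
      using R\<phi>[of "a@b"] la that by simp
    have lev: "lev M L (env (a@b)) = lincomb L a + lincomb (\<lambda>j. L (k+j)) b" if "length b = l" for L b
      using lev_env[OF la that klM] .
    have gz: "(lev M L (env (a@b)) = 0) \<longleftrightarrow> (lincomb L a = 0 \<and> (\<forall>j<l. L (k+j) = 0))" if Gb: "G b" for L b
    proof
      assume z: "lev M L (env (a@b)) = 0"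
      have lb: "length b = l" using Gb by (simp add: G_def)
      let ?A = "lincomb L a" and ?B = "lincomb (\<lambda>j. L (k+j)) b"
      have AB: "?A + ?B = 0" using z lev[OF lb] by simp
      have "?A = - ?B" using AB by (simp add: eq_neg_iff_add_eq_0)
      then have "?A \<in> vspan b" by (metis vspan_uminus vspan_iff)
      moreover have "?A \<in> vspan a" by (auto simp: vspan_iff)
      ultimately have A0: "?A = 0" using Gb by (auto simp: G_def)
      then have "?B = 0" using AB by simp
      then have "\<forall>j<l. L (k+j) = 0" using Gb lb by (auto simp: G_def lin_indep_def)
      then show "lincomb L a = 0 \<and> (\<forall>j<l. L (k+j) = 0)" using A0 by simp
    next
      assume h: "lincomb L a = 0 \<and> (\<forall>j<l. L (k+j) = 0)"
      have lb: "length b = l" using Gb by (simp add: G_def)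
      have "lincomb (\<lambda>j. L (k+j)) b = 0" using h lb by (intro lincomb_zero) auto
      then show "lev M L (env (a@b)) = 0" using h lev[OF lb] by simp
    qed
    have same: "R a b = R a g" if "G b" for b
    proof -
      have "agree M E (env (a@b)) (env (a@g))"
        unfolding agree_def using gz[OF that] gz[OF gG] by simp
      then show ?thesis using E Riff that gG by (simp add: G_def)
    qed
    have eq12: "(\<exists>b. G b \<and> R a b) \<longleftrightarrow> (\<forall>b. G b \<longrightarrow> R a b)"
      using same gG by blast
    have eq23: "(\<forall>b. G b \<longrightarrow> R a b) \<longleftrightarrow> exists_gt (card E) l (R a)"
    proof
      assume "\<forall>b. G b \<longrightarrow> R a b"
      then show "exists_gt (card E) l (R a)" by (intro lemG[of l a]) (auto simp: G_def)
    next
      assume ex: "exists_gt (card E) l (R a)"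
      show "\<forall>b. G b \<longrightarrow> R a b"
      proof (rule ccontr)
        assume "\<not> (\<forall>b. G b \<longrightarrow> R a b)"
        then have nRg: "\<not> R a g" using same gG by blast
        define F where "F = (\<lambda>L. (lincomb L a, \<lambda>j. L (k+j))) ` {L\<in>E. \<exists>j<l. L (k+j) \<noteq> 0}"
        have finF: "finite F" using finE by (simp add: F_def)
        have "card F \<le> card {L\<in>E. \<exists>j<l. L (k+j) \<noteq> 0}" unfolding F_def by (rule card_image_le) (use finE in auto)
        also have "\<dots> \<le> card E" by (rule card_mono) (use finE in auto)
        finally have cF: "card F \<le> card E" .
        have ndF: "\<forall>p\<in>F. \<exists>j<l. snd p j \<noteq> 0" by (auto simp: F_def)
        have "exists_gt (card E) l (\<lambda>ys. \<exists>p\<in>F. fst p + lincomb (snd p) ys = 0)"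
        proof (rule exists_gt_mono[OF _ ex])
          fix ys assume ly: "length ys = l" and Rys: "R a ys"
          have "sat (env (a@ys)) \<phi> \<noteq> sat (env (a@g)) \<phi>" using Rys nRg Riff ly gG by (simp add: G_def)
          then have "\<not> agree M E (env (a@ys)) (env (a@g))" using E by blast
          then obtain L where LE: "L \<in> E" and dif: "(lev M L (env (a@ys)) = 0) \<noteq> (lev M L (env (a@g)) = 0)"
            unfolding agree_def by blast
          have nzj: "\<exists>j<l. L (k+j) \<noteq> 0"
          proof (rule ccontr)
            assume "\<not> (\<exists>j<l. L (k+j) \<noteq> 0)"
            then have z: "\<forall>j<l. L (k+j) = 0" by simp
            have "lincomb (\<lambda>j. L (k+j)) ys = 0" using z ly by (intro lincomb_zero) auto
            then have "lev M L (env (a@ys)) = lincomb L a" using lev[OF ly] by simp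
            then show False using dif gz[OF gG, of L] z by simp
          qed
          then have "lev M L (env (a@g)) \<noteq> 0" using gz[OF gG, of L] by blast
          then have "lev M L (env (a@ys)) = 0" using dif by blast
          then have "lincomb L a + lincomb (\<lambda>j. L (k+j)) ys = 0" using lev[OF ly] by simp
          moreover have "(lincomb L a, \<lambda>j. L (k+j)) \<in> F" using LE nzj by (auto simp: F_def)
          ultimately show "\<exists>p\<in>F. fst p + lincomb (snd p) ys = 0" by force
        qed
        then show False using lemH[OF finF cF ndF] by simp
      qed
    qed
    show "((\<exists>b. length b = l \<and> lin_indep b \<and> vspan a \<inter> vspan b = {0} \<and> R a b) \<longleftrightarrow>
      (\<forall>b. length b = l \<and> lin_indep b \<and> vspan a \<inter> vspan b = {0} \<longrightarrow> R a b)) \<and>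
     ((\<forall>b. length b = l \<and> lin_indep b \<and> vspan a \<inter> vspan b = {0} \<longrightarrow> R a b) \<longleftrightarrow>
      exists_gt (card E) l (R a))"
      using eq12 eq23 unfolding G_def conj_assoc by (rule conjI)
  qed
qed


end
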